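(* For any $n\ge1$, $$C_n(q)=\sum_{\pi\in\widetilde{\mathfrak{S}}_{2n+1,n}(213)}q^{\,n^2-(3\text{-}12)\pi}.$$
   Context: $C_n(q):=C_n(q,q^2)$, where $C_n(t,q)$ is defined by $\sum_{n\ge0}C_n(t,q)z^n=1/(1-c_1z/(1-c_2z/(1-c_3z/\cdots)))$ with $c_{2k-1}=q^{k-1}$, $c_{2k}=tq^{k-1}$. $(3\text{-}12)\pi=\#\{(i,j):i<j<m,\ \pi(j)<\pi(j+1)<\pi(i)\}$ for $\pi\in\mathfrak{S}_m$. $\mathsf{des}\,\pi=\#\{i\in[m-1]:\pi(i)>\pi(i+1)\}$; $\mathsf{dd}\,\pi$ is the number of $i\in[m]$ with $\pi(i-1)>\pi(i)>\pi(i+1)$ under $\pi(0)=\pi(m+1)=0$. $\widetilde{\mathfrak{S}}_{m,k}(213)=\{\pi\in\mathfrak{S}_m:\pi\text{ avoids }213,\ \mathsf{dd}\,\pi=0,\ \mathsf{des}\,\pi=k\}$. *)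

theory Defs
  imports "HOL-Computational_Algebra.Formal_Power_Series" "HOL-Combinatorics.Permutations"
begin

definition cfc :: "real \<Rightarrow> real \<Rightarrow> nat \<Rightarrow> real" where
  "cfc t q j = (if odd j then q ^ ((j - 1) div 2) else t * q ^ (j div 2 - 1))"

fun cf_trunc :: "real \<Rightarrow> real \<Rightarrow> nat \<Rightarrow> nat \<Rightarrow> real fps" where
  "cf_trunc t q 0 j = 1"
| "cf_trunc t q (Suc m) j =
     inverse (1 - fps_const (cfc t q j) * fps_X * cf_trunc t q m (Suc j))"

definition Cfrac :: "real \<Rightarrow> real \<Rightarrow> real fps" where
  "Cfrac t q = lim (\<lambda>m. cf_trunc t q m 1)"

definition C2 :: "nat \<Rightarrow> real \<Rightarrow> real \<Rightarrow> real" where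
  "C2 n t q = fps_nth (Cfrac t q) n"

definition C1 :: "nat \<Rightarrow> real \<Rightarrow> real" where
  "C1 n q = C2 n q (q ^ 2)"

definition pat312 :: "nat \<Rightarrow> (nat \<Rightarrow> nat) \<Rightarrow> nat" where
  "pat312 m p = card {(i, j). 1 \<le> i \<and> i < j \<and> j < m \<and> p j < p (j + 1) \<and> p (j + 1) < p i}"

definition des :: "nat \<Rightarrow> (nat \<Rightarrow> nat) \<Rightarrow> nat" where
  "des m p = card {i \<in> {1..m - 1}. p i > p (i + 1)}"

definition pext :: "nat \<Rightarrow> (nat \<Rightarrow> nat) \<Rightarrow> nat \<Rightarrow> nat" where
  "pext m p i = (if i \<in> {1..m} then p i else 0)"

definition dd :: "nat \<Rightarrow> (nat \<Rightarrow> nat) \<Rightarrow> nat" where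
  "dd m p = card {i \<in> {1..m}. pext m p (i - 1) > pext m p i \<and> pext m p i > pext m p (i + 1)}"

definition avoids213 :: "nat \<Rightarrow> (nat \<Rightarrow> nat) \<Rightarrow> bool" where
  "avoids213 m p \<longleftrightarrow> \<not> (\<exists>i j k. 1 \<le> i \<and> i < j \<and> j < k \<and> k \<le> m \<and> p j < p i \<and> p i < p k)"

definition S213 :: "nat \<Rightarrow> nat \<Rightarrow> (nat \<Rightarrow> nat) set" where
  "S213 m k = {p. p permutes {1..m} \<and> avoids213 m p \<and> dd m p = 0 \<and> des m p = k}"

end

theory Submission
  imports Defs
begin


fun CC :: "real \<Rightarrow> nat \<Rightarrow> real" where
  "CC q 0 = 1"
| "CC q (Suc n) = (\<Sum>k\<le>n. q ^ k * CC q k * CC q (n - k))"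

lemma cfc_qq: assumes "j \<ge> 1" shows "cfc q (q^2) j = q ^ (j - 1)"
proof (cases "odd j")
  case True
  then obtain k where k: "j = 2 * k + 1" by (auto elim: oddE)
  then show ?thesis using True by (simp add: cfc_def power_mult[symmetric])
next
  case False
  then obtain k where k: "j = 2 * k" by (auto elim: evenE)
  with assms obtain k' where k': "k = Suc k'" by (cases k) auto
  have "q * (q\<^sup>2) ^ k' = q ^ (2 * k' + 1)" by (simp add: power_mult[symmetric])
  then show ?thesis using False k k' by (simp add: cfc_def)
qed

lemma trunc_nth:
  "\<forall>m j. j \<ge> 1 \<longrightarrow> n \<le> m \<longrightarrow> fps_nth (cf_trunc q (q^2) m j) n = q ^ ((j - 1) * n) * CC q n"
proof (induction n rule: less_induct)
  case (less n)
  show ?case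
  proof (intro allI impI)
    fix m j :: nat assume j: "j \<ge> 1" and nm: "n \<le> m"
    show "fps_nth (cf_trunc q (q^2) m j) n = q ^ ((j - 1) * n) * CC q n"
    proof (cases n)
      case 0
      then obtain m' where m: "m = Suc m' \<or> m = 0" by (cases m) auto
      then show ?thesis using 0 by (cases m) (auto simp: fps_inverse_def)
    next
      case (Suc n')
      then obtain m' where m: "m = Suc m'" using nm by (cases m) auto
      have IH: "\<And>i m j. i < n \<Longrightarrow> 1 \<le> j \<Longrightarrow> i \<le> m \<Longrightarrow> fps_nth (cf_trunc q (q^2) m j) i = q ^ ((j - 1) * i) * CC q i"
        using less by blast
      define T where "T = cf_trunc q (q^2) m' (Suc j)"
      define G where "G = cf_trunc q (q^2) m j"
      define H where "H = 1 - fps_const (q ^ (j - 1)) * fps_X * T"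
      have HG: "G = inverse H" unfolding G_def H_def T_def m using cfc_qq[OF j] by simp
      have H0: "fps_nth H 0 = 1" by (simp add: H_def)
      have "G * H = 1" unfolding HG by (rule inverse_mult_eq_1) (simp add: H0)
      hence GG: "G = 1 + fps_const (q ^ (j - 1)) * fps_X * T * G"
        unfolding H_def by (simp add: algebra_simps)
      have "fps_nth G n = fps_nth (fps_const (q ^ (j - 1)) * (fps_X * (T * G))) n"
        using Suc by (subst GG) (simp add: mult.assoc)
      also have "\<dots> = q ^ (j - 1) * fps_nth (T * G) n'" using Suc by simp
      also have "fps_nth (T * G) n' = (\<Sum>i=0..n'. fps_nth T i * fps_nth G (n' - i))" by (rule fps_mult_nth)
      also have "\<dots> = (\<Sum>i=0..n'. q ^ ((j - 1) * n') * (q ^ i * CC q i * CC q (n' - i)))"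
      proof (rule sum.cong[OF refl])
        fix i assume i: "i \<in> {0..n'}"
        have "fps_nth T i = q ^ (j * i) * CC q i"
          using IH[of i "Suc j" m'] i Suc nm m unfolding T_def by auto
        moreover have "fps_nth G (n' - i) = q ^ ((j - 1) * (n' - i)) * CC q (n' - i)"
          using IH[of "n' - i" j m] i Suc nm m j unfolding G_def by auto
        moreover obtain j' where j': "j = Suc j'" using j by (cases j) auto
        moreover have "j * i + (j - 1) * (n' - i) = (j - 1) * n' + i"
          using i j' by (simp add: algebra_simps diff_mult_distrib2)
        moreover have "q ^ (j * i) * q ^ ((j - 1) * (n' - i)) = q ^ ((j - 1) * n') * q ^ i"
          by (metis calculation(4) power_add)
        ultimately show "fps_nth T i * fps_nth G (n' - i) = q ^ ((j - 1) * n') * (q ^ i * CC q i * CC q (n' - i))"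
          by (simp add: algebra_simps)
      qed
      also have "\<dots> = q ^ ((j - 1) * n') * CC q n"
        using Suc by (simp add: sum_distrib_left[symmetric] atLeast0AtMost)
      finally have "fps_nth G n = q ^ (j - 1) * (q ^ ((j - 1) * n') * CC q n)" .
      also have "\<dots> = q ^ ((j - 1) * n) * CC q n"
        unfolding Suc mult_Suc_right power_add by (simp add: mult.assoc)
      finally show ?thesis unfolding G_def .
    qed
  qed
qed

lemma C1_CC: "C1 n q = CC q n"
proof -
  have lim: "(\<lambda>m. cf_trunc q (q^2) m 1) \<longlonglongrightarrow> Abs_fps (CC q)"
  proof (rule tendsto_fpsI)
    fix n
    show "\<forall>\<^sub>F m in sequentially. fps_nth (cf_trunc q (q^2) m 1) n = fps_nth (Abs_fps (CC q)) n"
      unfolding eventually_sequentially using trunc_nth[of n q] by (intro exI[of _ n]) auto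
  qed
  have "Cfrac q (q^2) = Abs_fps (CC q)"
    unfolding Cfrac_def by (rule limI[OF lim])
  then show ?thesis unfolding C1_def C2_def by simp
qed



fun adj :: "'a list \<Rightarrow> ('a \<times> 'a) list" where
  "adj (x # y # zs) = (x, y) # adj (y # zs)"
| "adj _ = []"

definition ascb :: "nat \<Rightarrow> nat list \<Rightarrow> nat" where
  "ascb x xs = length (filter (\<lambda>(u, w). u < w \<and> w < x) (adj xs))"

definition nasc :: "nat list \<Rightarrow> nat" where
  "nasc xs = length (filter (\<lambda>(u, w). u < w) (adj xs))"

fun patR :: "nat list \<Rightarrow> nat" where
  "patR [] = 0"
| "patR (x # xs) = patR xs + ascb x xs"

fun altD :: "nat list \<Rightarrow> bool" where
  "altD [x] = True"
| "altD (x # y # z # zs) = (y < x \<and> y < z \<and> altD (z # zs))"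
| "altD _ = False"

fun before :: "nat list \<Rightarrow> nat \<Rightarrow> nat \<Rightarrow> bool" where
  "before [] x y = False"
| "before (z # zs) x y = ((z = x \<and> y \<in> set zs) \<or> before zs x y)"

definition avB :: "nat list \<Rightarrow> bool" where
  "avB xs = (\<forall>x y z. before xs x y \<longrightarrow> before xs y z \<longrightarrow> \<not> (y < x \<and> x < z))"

lemma adj_app: "us \<noteq> [] \<Longrightarrow> vs \<noteq> [] \<Longrightarrow> adj (us @ vs) = adj us @ (last us, hd vs) # adj vs"
proof (induction us rule: induct_list012)
  case (2 x)
  then show ?case by (cases vs) auto
next
  case (3 x y zs)
  then show ?case by (cases zs) auto
qed simp

lemma set_adj: "(u, w) \<in> set (adj xs) \<Longrightarrow> u \<in> set xs \<and> w \<in> set xs"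
  by (induction xs rule: adj.induct) auto

lemma ascb_all: "(\<forall>v\<in>set vs. v < x) \<Longrightarrow> ascb x vs = nasc vs"
  unfolding ascb_def nasc_def
  by (rule arg_cong[where f=length], rule filter_cong) (auto dest: set_adj)

lemma ascb_none: "(\<forall>v\<in>set vs. x < v) \<Longrightarrow> ascb x vs = 0"
  unfolding ascb_def using set_adj by (fastforce simp: filter_empty_conv)

lemma ascb_app:
  assumes "\<forall>u\<in>set us. \<forall>v\<in>set vs. v < u" "\<forall>v\<in>set vs. v < x"
  shows "ascb x (us @ vs) = ascb x us + nasc vs"
proof (cases "us = [] \<or> vs = []")
  case True
  then show ?thesis using ascb_all[OF assms(2)] by (auto simp: nasc_def ascb_def)
next
  case False
  then have "hd vs < last us" using assms(1) by auto
  then show ?thesis using False ascb_all[OF assms(2)] by (simp add: adj_app ascb_def)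
qed

lemma patR_app:
  "(\<forall>u\<in>set us. \<forall>v\<in>set vs. v < u) \<Longrightarrow> patR (us @ vs) = patR us + patR vs + length us * nasc vs"
proof (induction us)
  case (Cons x us)
  have "ascb x (us @ vs) = ascb x us + nasc vs"
    using Cons.prems by (intro ascb_app) auto
  then show ?case using Cons by simp
qed simp

lemma nasc_alt: "altD xs \<Longrightarrow> nasc xs = length xs div 2"
  by (induction xs rule: altD.induct) (auto simp: nasc_def)

lemma patR_low: "(\<forall>v\<in>set vs. a < v) \<Longrightarrow> patR (a # vs) = patR vs"
  using ascb_none by simp

lemma nasc_low: "a < b \<Longrightarrow> nasc (a # b # vs) = Suc (nasc (b # vs))"
  by (simp add: nasc_def)

lemma alt_split: "even (length us) \<Longrightarrow> altD (us @ u # vs) = (altD (us @ [u]) \<and> altD (u # vs))"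
proof (induction us rule: induct_list012)
  case (3 x y zs)
  then show ?case by (cases zs) auto
qed auto

lemma altD_two: "\<not> altD [v, vb]" by simp

lemma min_pos:
  "altD xs \<Longrightarrow> xs = us @ a # vs \<Longrightarrow> (\<forall>x\<in>set us \<union> set vs. a < x) \<Longrightarrow> even (length us)
   \<Longrightarrow> us = [] \<and> vs = []"
proof (induction xs arbitrary: us rule: altD.induct)
  case (1 x)
  then show ?case by (cases us) auto
next
  case (2 x y z zs)
  show ?case
  proof (cases us)
    case Nil
    then show ?thesis using 2 by auto
  next
    case (Cons x' us1)
    then show ?thesis
    proof (cases us1)
      case Nil
      then show ?thesis using 2 Cons by auto
    next
      case (Cons y' us')
      have us: "us = x # y # us'" using 2(3) \<open>us = x' # us1\<close> Cons by auto
      have "z # zs = us' @ a # vs" using 2(3) us by simp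
      from 2(1)[OF _ this] 2(2,4,5) us have "us' = [] \<and> vs = []" by auto
      then have "a = z" using \<open>z # zs = us' @ a # vs\<close> by simp
      moreover have "y < z" using 2(2) by simp
      moreover have "a < y" using 2(4) us by simp
      ultimately show ?thesis by simp
    qed
  qed
qed ((metis altD_two Nil_is_append_conv list.distinct(1))+)

lemma before_app: "before (us @ vs) x y = (before us x y \<or> before vs x y \<or> (x \<in> set us \<and> y \<in> set vs))"
  by (induction us) auto

lemma before_set: "before xs x y \<Longrightarrow> x \<in> set xs \<and> y \<in> set xs"
  by (induction xs) auto

lemma av_split:
  assumes ord: "\<forall>u\<in>set us. \<forall>v\<in>set vs. v < u" and low: "\<forall>x\<in>set us \<union> set vs. a < x"
  shows "avB (us @ a # vs) = (avB us \<and> avB vs)"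
proof
  assume "avB (us @ a # vs)"
  then show "avB us \<and> avB vs" unfolding avB_def before_app by auto
next
  assume av: "avB us \<and> avB vs"
  show "avB (us @ a # vs)"
    unfolding avB_def
  proof (intro allI impI notI)
    fix x y z
    assume B1: "before (us @ a # vs) x y" and B2: "before (us @ a # vs) y z" and yxz: "y < x \<and> x < z"
    have B1': "before us x y \<or> before vs x y \<or> (x = a \<and> y \<in> set vs) \<or> (x \<in> set us \<and> (y = a \<or> y \<in> set vs))"
      using B1 by (auto simp: before_app)
    have B2': "before us y z \<or> before vs y z \<or> (y = a \<and> z \<in> set vs) \<or> (y \<in> set us \<and> (z = a \<or> z \<in> set vs))"
      using B2 by (auto simp: before_app)
    show False
    proof -
      { assume b: "before us x y"
        then have xy: "x \<in> set us" "y \<in> set us" using before_set by auto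
        have ?thesis using B2'
        proof (elim disjE conjE)
          assume "before us y z" then show False using av b yxz unfolding avB_def by blast
        next
          assume "before vs y z" then show False using xy before_set ord by fastforce
        next
          assume "y = a" then show False using xy low by (metis UnI1 UnI2 less_irrefl)
        next
          assume "y \<in> set us" "z = a" then show False using xy low yxz by (metis UnI1 less_asym)
        next
          assume "y \<in> set us" "z \<in> set vs" then show False using xy ord yxz by fastforce
        qed }
      moreover
      { assume b: "before vs x y"
        then have xy: "x \<in> set vs" "y \<in> set vs" using before_set by auto
        have ?thesis using B2'
        proof (elim disjE conjE)
          assume "before us y z" then show False using xy before_set ord by fastforce
        next
          assume "before vs y z" then show False using av b yxz unfolding avB_def by blast
        next
          assume "y = a" then show False using xy low by (metis UnI1 UnI2 less_irrefl)
        next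
          assume "y \<in> set us" then show False using xy ord by fastforce
        next
          assume "y \<in> set us" then show False using xy ord by fastforce
        qed }
      moreover
      { assume "x = a" "y \<in> set vs" then have ?thesis using low yxz by (metis UnI2 less_asym) }
      moreover
      { assume xy: "x \<in> set us" "y = a \<or> y \<in> set vs"
        have ?thesis using B2'
        proof (elim disjE conjE)
          assume "before us y z" then show False using xy before_set ord low by fastforce
        next
          assume "before vs y z" then show False using xy before_set ord yxz by fastforce
        next
          assume "z \<in> set vs" then show False using xy ord yxz by fastforce
        next
          assume "y \<in> set us" then show False using xy ord low by fastforce
        next
          assume "y \<in> set us" then show False using xy ord low by fastforce
        qed }
      ultimately show ?thesis using B1' by blast
    qed
  qed
qed

lemma av_order:
  assumes "avB (us @ a # vs)" "\<forall>x\<in>set us \<union> set vs. a < x" "set us \<inter> set vs = {}"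
  shows "\<forall>u\<in>set us. \<forall>v\<in>set vs. v < u"
proof (intro ballI)
  fix u v assume u: "u \<in> set us" and v: "v \<in> set vs"
  have "before (us @ a # vs) u a" "before (us @ a # vs) a v"
    using u v by (auto simp: before_app)
  then have "\<not> (a < u \<and> u < v)" using assms(1) unfolding avB_def by blast
  moreover have "u \<noteq> v" using u v assms(3) by auto
  ultimately show "v < u" using assms(2) u by auto
qed



definition G :: "nat \<Rightarrow> nat \<Rightarrow> nat list set" where
  "G a n = {xs. distinct xs \<and> set xs = {a..<a + 2 * n + 1} \<and> altD xs \<and> avB xs}"

lemma G_length: "xs \<in> G a n \<Longrightarrow> length xs = 2 * n + 1"
proof -
  assume "xs \<in> G a n"
  then have "distinct xs" "set xs = {a..<a + 2 * n + 1}" unfolding G_def by auto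
  then have "length xs = card {a..<a + 2 * n + 1}" using distinct_card by metis
  then show ?thesis by simp
qed

lemma G_finite: "finite (G a n)"
proof (rule finite_subset[OF _ finite_lists_length_eq[OF finite_atLeastLessThan[of a "a + 2 * n + 1"], of "2 * n + 1"]])
  show "G a n \<subseteq> {xs. set xs \<subseteq> {a..<a + 2 * n + 1} \<and> length xs = 2 * n + 1}"
    using G_length by (auto simp: G_def)
qed

lemma split_sets:
  fixes S T :: "nat set"
  assumes U: "S \<union> T = {b..<b+s+t}" and D: "S \<inter> T = {}" and cT: "card T = t" and fT: "finite T"
    and O: "\<forall>x\<in>S. \<forall>y\<in>T. y < x"
  shows "T = {b..<b+t} \<and> S = {b+t..<b+s+t}"
proof -
  have sub: "T \<subseteq> {b..<b+t}"
  proof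
    fix y assume y: "y \<in> T"
    have yr: "b \<le> y" "y < b+s+t" using y U by auto
    have "{b..y} \<subseteq> T"
    proof
      fix z assume z: "z \<in> {b..y}"
      then have "z \<in> S \<union> T" using U yr by auto
      moreover have "z \<notin> S" using O y z by force
      ultimately show "z \<in> T" by blast
    qed
    then have "card {b..y} \<le> t" using card_mono cT fT by metis
    then show "y \<in> {b..<b+t}" using yr by auto
  qed
  have T: "T = {b..<b+t}" using card_subset_eq[OF _ sub] cT by simp
  have "S = (S \<union> T) - T" using D by auto
  also have "\<dots> = {b..<b+s+t} - {b..<b+t}" using U T by simp
  also have "\<dots> = {b+t..<b+s+t}" by auto
  finally show ?thesis using T by simp
qed


lemma G_Suc:
  "G a (Suc n) = (\<Union>k\<in>{..n}. (\<lambda>(u, v). u @ a # v) ` (G (a + 2 * (n - k) + 2) k \<times> G (a + 1) (n - k)))"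
proof (rule set_eqI, rule iffI)
  fix xs assume xs: "xs \<in> G a (Suc n)"
  have dist: "distinct xs" and sxs: "set xs = {a..<a + 2 * Suc n + 1}" and alt: "altD xs" and av: "avB xs"
    using xs by (auto simp: G_def)
  have len: "length xs = 2 * n + 3" using G_length[OF xs] by simp
  have "a \<in> set xs" using sxs by auto
  then obtain us vs where xsd: "xs = us @ a # vs" by (meson split_list)
  have aus: "a \<notin> set us" and avs: "a \<notin> set vs" and duv: "set us \<inter> set vs = {}"
    and dus: "distinct us" and dvs: "distinct vs"
    using dist xsd by auto
  have low: "\<forall>x\<in>set us \<union> set vs. a < x"
  proof
    fix x assume x: "x \<in> set us \<union> set vs"
    then have "x \<in> set xs" "x \<noteq> a" using xsd aus avs by auto
    then show "a < x" using sxs by auto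
  qed
  have "odd (length us)"
  proof (rule ccontr)
    assume "\<not> odd (length us)"
    then have "us = [] \<and> vs = []" using min_pos[OF alt xsd low] by simp
    then show False using len xsd by simp
  qed
  then obtain k where k: "length us = 2 * k + 1" by (auto elim: oddE)
  define j where "j = n - k"
  have kn: "k \<le> n" and lvs: "length vs = 2 * j + 1" using len xsd k unfolding j_def by auto
  have ord: "\<forall>u\<in>set us. \<forall>v\<in>set vs. v < u" using av_order[OF _ low duv] av xsd by simp
  have U: "set us \<union> set vs = {a + 1..<a + 1 + (2 * k + 1) + (2 * j + 1)}"
  proof -
    have "set us \<union> set vs = set xs - {a}" using xsd aus avs by auto
    also have "\<dots> = {a + 1..<a + 2 * Suc n + 1}" by (rule set_eqI) (simp add: sxs, linarith)
    also have "\<dots> = {a + 1..<a + 1 + (2 * k + 1) + (2 * j + 1)}"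
    proof -
      have "a + 2 * Suc n + 1 = a + 1 + (2 * k + 1) + (2 * j + 1)" using kn unfolding j_def by simp
      then show ?thesis by (rule arg_cong[where f="\<lambda>x. {a + 1..<x}"])
    qed
    finally show ?thesis .
  qed
  have ss: "set vs = {a + 1..<a + 1 + (2 * j + 1)} \<and> set us = {a + 1 + (2 * j + 1)..<a + 1 + (2 * k + 1) + (2 * j + 1)}"
    by (rule split_sets[OF U duv]) (simp_all add: distinct_card[OF dvs] lvs ord)
  obtain u0 w where u0: "us = u0 @ [w]" using k by (cases us rule: rev_exhaust) auto
  have ev: "even (length u0)" using k u0 by simp
  obtain b v' where bv: "vs = b # v'" using lvs by (cases vs) auto
  have alt2: "altD us \<and> altD (w # a # vs)" using alt_split[OF ev, of w "a # vs"] alt xsd u0 by simp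
  then have altv: "altD vs" using bv by simp
  have avs2: "avB us \<and> avB vs" using av_split[OF ord low] av xsd by simp
  have e1: "a + 1 + (2 * j + 1) = a + 2 * (n - k) + 2" unfolding j_def by simp
  have e2: "a + 1 + (2 * k + 1) + (2 * j + 1) = a + 2 * (n - k) + 2 + 2 * k + 1" using kn unfolding j_def by simp
  have e3: "a + 1 + (2 * j + 1) = a + 1 + 2 * (n - k) + 1" unfolding j_def by simp
  have sus: "set us = {a + 2 * (n - k) + 2..<a + 2 * (n - k) + 2 + 2 * k + 1}"
    by (subst ss[THEN conjunct2]) (simp only: e1 e2)
  have svs: "set vs = {a + 1..<a + 1 + 2 * (n - k) + 1}"
    by (subst ss[THEN conjunct1]) (simp only: e3)
  have usG: "us \<in> G (a + 2 * (n - k) + 2) k"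
    unfolding G_def mem_Collect_eq using dus alt2 avs2 sus by blast
  have vsG: "vs \<in> G (a + 1) (n - k)"
    unfolding G_def mem_Collect_eq using dvs altv avs2 svs by blast
  have "(us, vs) \<in> G (a + 2 * (n - k) + 2) k \<times> G (a + 1) (n - k)" using usG vsG by (rule SigmaI)
  moreover have "xs = (\<lambda>(u, v). u @ a # v) (us, vs)" using xsd by simp
  ultimately have "xs \<in> (\<lambda>(u, v). u @ a # v) ` (G (a + 2 * (n - k) + 2) k \<times> G (a + 1) (n - k))"
    by (rule rev_image_eqI)
  then show "xs \<in> (\<Union>k\<in>{..n}. (\<lambda>(u, v). u @ a # v) ` (G (a + 2 * (n - k) + 2) k \<times> G (a + 1) (n - k)))"
    using kn by (intro UN_I[of k]) auto
next
  fix xs assume "xs \<in> (\<Union>k\<in>{..n}. (\<lambda>(u, v). u @ a # v) ` (G (a + 2 * (n - k) + 2) k \<times> G (a + 1) (n - k)))"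
  then obtain k us vs where kn: "k \<le> n" and xsd: "xs = us @ a # vs"
    and us: "us \<in> G (a + 2 * (n - k) + 2) k" and vs: "vs \<in> G (a + 1) (n - k)" by auto
  define j where "j = n - k"
  have nkj: "n = k + j" using kn unfolding j_def by simp
  have sus0: "set us = {a + 2 * (n - k) + 2..<a + 2 * (n - k) + 2 + 2 * k + 1}" using us unfolding G_def by blast
  have svs0: "set vs = {a + 1..<a + 1 + 2 * (n - k) + 1}" using vs unfolding G_def by blast
  have f1: "a + 2 * (n - k) + 2 = a + 2 * j + 2" "a + 2 * j + 2 + 2 * k + 1 = a + 2 * n + 3"
    "a + 1 + 2 * (n - k) + 1 = a + 2 * j + 2" using kn unfolding j_def by simp_all
  have sus: "set us = {a + 2 * j + 2..<a + 2 * n + 3}" using sus0 unfolding f1 .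
  have svs: "set vs = {a + 1..<a + 2 * j + 2}" using svs0 unfolding f1 .
  have ord: "\<forall>u\<in>set us. \<forall>v\<in>set vs. v < u" using sus svs by auto
  have low: "\<forall>x\<in>set us \<union> set vs. a < x" using sus svs by auto
  have uP: "distinct us" "altD us" "avB us" using us unfolding G_def by blast+
  have vP: "distinct vs" "altD vs" "avB vs" using vs unfolding G_def by blast+
  have nin: "a \<notin> set us" "a \<notin> set vs" "set us \<inter> set vs = {}" using sus svs by auto
  have dist: "distinct xs" unfolding xsd using uP(1) vP(1) nin by auto
  have sxs: "set xs = {a..<a + 2 * Suc n + 1}"
  proof (rule set_eqI)
    fix x
    have "x \<in> set xs \<longleftrightarrow> x \<in> set us \<or> x = a \<or> x \<in> set vs" unfolding xsd by auto
    also have "\<dots> \<longleftrightarrow> (a + 2 * j + 2 \<le> x \<and> x < a + 2 * n + 3) \<or> x = a \<or> (a + 1 \<le> x \<and> x < a + 2 * j + 2)"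
      unfolding sus svs by simp
    also have "\<dots> \<longleftrightarrow> x \<in> {a..<a + 2 * Suc n + 1}" using nkj by auto
    finally show "x \<in> set xs \<longleftrightarrow> x \<in> {a..<a + 2 * Suc n + 1}" .
  qed
  have lus: "length us = 2 * k + 1" using G_length[OF us] .
  obtain u0 w where u0: "us = u0 @ [w]" using lus by (cases us rule: rev_exhaust) auto
  have ev: "even (length u0)" using lus u0 by simp
  have lvs: "length vs = 2 * j + 1" using G_length[OF vs] unfolding j_def .
  obtain b v' where bv: "vs = b # v'" using lvs by (cases vs) auto
  have "w \<in> set us" "b \<in> set vs" using u0 bv by auto
  then have aw: "a < w" "a < b" using low by auto
  have xs2: "xs = u0 @ w # (a # vs)" using xsd u0 by simp
  have "altD (u0 @ w # (a # vs)) = (altD (u0 @ [w]) \<and> altD (w # a # vs))" by (rule alt_split[OF ev])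
  moreover have "altD (w # a # vs)" using aw vP(2) bv by simp
  ultimately have alt: "altD xs" using xs2 uP(2) u0 by simp
  have av: "avB xs" using av_split[OF ord low] uP(3) vP(3) xsd by simp
  show "xs \<in> G a (Suc n)" unfolding G_def using dist sxs alt av by blast
qed


lemma patR_split:
  assumes us: "us \<in> G b k" and vs: "vs \<in> G c j"
    and ord: "\<forall>u\<in>set us. \<forall>v\<in>set vs. v < u" and low: "\<forall>x\<in>set us \<union> set vs. a < x"
  shows "patR (us @ a # vs) = patR us + patR vs + (2 * k + 1) * (j + 1)"
proof -
  have "patR (us @ (a # vs)) = patR us + patR (a # vs) + length us * nasc (a # vs)"
    by (rule patR_app) (use ord low in auto)
  moreover have "patR (a # vs) = patR vs" using low by (intro patR_low) auto
  moreover have "nasc (a # vs) = j + 1"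
  proof -
    have lvs: "length vs = 2 * j + 1" using G_length[OF vs] .
    obtain b' v' where bv: "vs = b' # v'" using lvs by (cases vs) auto
    have "nasc (a # vs) = Suc (nasc vs)" using bv low by (simp add: nasc_low)
    also have "nasc vs = j" using nasc_alt[of vs] vs lvs unfolding G_def by simp
    finally show ?thesis by simp
  qed
  ultimately show ?thesis using G_length[OF us] by simp
qed

lemma G_sum:
  fixes q :: real
  assumes q: "q \<noteq> 0"
  shows "(\<Sum>xs\<in>G a n. q powi (int (n^2) - int (patR xs))) = CC q n"
proof (induction n arbitrary: a rule: less_induct)
  case (less n)
  show ?case
  proof (cases n)
    case 0
    have "G a 0 = {[a]}"
    proof (rule set_eqI, rule iffI)
      fix xs assume xs: "xs \<in> G a 0"
      then have "length xs = 1" "set xs = {a}" using G_length[OF xs] unfolding G_def by auto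
      then show "xs \<in> {[a]}" by (cases xs) auto
    qed (auto simp: G_def avB_def)
    then show ?thesis using 0 by (simp add: ascb_def)
  next
    case (Suc m)
    define A where "A k = (\<lambda>(u, v). u @ a # v) ` (G (a + 2 * (m - k) + 2) k \<times> G (a + 1) (m - k))" for k
    define f where "f xs = q powi (int (n^2) - int (patR xs))" for xs
    have fin: "\<And>k. finite (A k)" unfolding A_def using G_finite by auto
    have disj: "\<forall>k\<in>{..m}. \<forall>k'\<in>{..m}. k \<noteq> k' \<longrightarrow> A k \<inter> A k' = {}"
    proof (intro ballI impI)
      fix k k' :: nat assume "k \<noteq> k'"
      show "A k \<inter> A k' = {}"
      proof (rule ccontr)
        assume "A k \<inter> A k' \<noteq> {}"
        then obtain x where x1: "x \<in> A k" and x2: "x \<in> A k'" by blast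
        from x1 obtain u v where u: "u \<in> G (a + 2 * (m - k) + 2) k" and v: "v \<in> G (a + 1) (m - k)"
          and xu: "x = u @ a # v" unfolding A_def by auto
        from x2 obtain u' v' where u': "u' \<in> G (a + 2 * (m - k') + 2) k'" and v': "v' \<in> G (a + 1) (m - k')"
          and xu': "x = u' @ a # v'" unfolding A_def by auto
        have eq: "u @ a # v = u' @ a # v'" using xu xu' by simp
        have "a \<notin> set u" "a \<notin> set v" using u v unfolding G_def by auto
        then have "u = u'" using eq append_Cons_eq_iff by metis
        then show False using G_length[OF u] G_length[OF u'] \<open>k \<noteq> k'\<close> by simp
      qed
    qed
    have "(\<Sum>xs\<in>G a n. f xs) = (\<Sum>k\<in>{..m}. \<Sum>xs\<in>A k. f xs)"
      unfolding Suc G_Suc A_def[symmetric] by (rule sum.UNION_disjoint[OF _ _ disj]) (use fin in auto)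
    also have "\<dots> = (\<Sum>k\<in>{..m}. CC q k * CC q (m - k) * q ^ (m - k))"
    proof (rule sum.cong[OF refl])
      fix k assume k: "k \<in> {..m}"
      define j where "j = m - k"
      have nkj: "n = k + j + 1" using k Suc unfolding j_def by simp
      let ?G1 = "G (a + 2 * j + 2) k" and ?G2 = "G (a + 1) j"
      have inj: "inj_on (\<lambda>(u, v). u @ a # v) (?G1 \<times> ?G2)"
      proof (rule inj_onI, clarify)
        fix u v u' v' assume "u \<in> ?G1" "v \<in> ?G2" "u' \<in> ?G1" "v' \<in> ?G2" and eq: "u @ a # v = u' @ a # v'"
        then have "a \<notin> set u" "a \<notin> set v" unfolding G_def by auto
        then show "u = u' \<and> v = v'" using eq append_Cons_eq_iff by metis
      qed
      have fsplit: "f (u @ a # v) = (q powi (int (k^2) - int (patR u))) * (q powi (int (j^2) - int (patR v))) * q ^ j"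
        if u: "u \<in> ?G1" and v: "v \<in> ?G2" for u v
      proof -
        have su: "set u = {a + 2 * j + 2..<a + 2 * j + 2 + 2 * k + 1}" using u unfolding G_def by simp
        have sv: "set v = {a + 1..<a + 1 + 2 * j + 1}" using v unfolding G_def by simp
        have pr: "patR (u @ a # v) = patR u + patR v + (2 * k + 1) * (j + 1)"
          by (rule patR_split[OF u v]) (use su sv in auto)
        have "int (n^2) - int (patR (u @ a # v)) = (int (k^2) - int (patR u)) + (int (j^2) - int (patR v)) + int j"
          unfolding pr nkj by (simp add: power2_eq_square algebra_simps)
        then show ?thesis unfolding f_def using q by (simp add: power_int_add)
      qed
      have "(\<Sum>xs\<in>A k. f xs) = (\<Sum>(u, v)\<in>?G1 \<times> ?G2. f (u @ a # v))"
        unfolding A_def j_def[symmetric] by (subst sum.reindex[OF inj]) (simp add: case_prod_beta comp_def)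
      also have "\<dots> = (\<Sum>(u, v)\<in>?G1 \<times> ?G2. (q powi (int (k^2) - int (patR u))) * (q powi (int (j^2) - int (patR v))) * q ^ j)"
        by (rule sum.cong[OF refl]) (use fsplit in auto)
      also have "\<dots> = (\<Sum>u\<in>?G1. q powi (int (k^2) - int (patR u))) * (\<Sum>v\<in>?G2. q powi (int (j^2) - int (patR v))) * q ^ j"
        unfolding sum.cartesian_product[symmetric] by (simp add: sum_distrib_left sum_distrib_right, rule sum.swap)
      also have "\<dots> = CC q k * CC q j * q ^ j"
        using less(1)[of k "a + 2 * j + 2"] less(1)[of j "a + 1"] nkj by simp
      finally show "(\<Sum>xs\<in>A k. f xs) = CC q k * CC q (m - k) * q ^ (m - k)" unfolding j_def .
    qed
    also have "\<dots> = (\<Sum>k\<in>{..m}. q ^ k * CC q k * CC q (m - k))"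
      by (rule sum.reindex_bij_witness[of _ "\<lambda>k. m - k" "\<lambda>k. m - k"]) (auto simp: algebra_simps)
    also have "\<dots> = CC q n" using Suc by simp
    finally show ?thesis unfolding f_def .
  qed
qed



lemma adj_zip: "adj xs = zip xs (tl xs)"
  by (induction xs rule: adj.induct) auto

lemma ascb_card: "ascb x xs = card {j. Suc j < length xs \<and> xs ! j < xs ! Suc j \<and> xs ! Suc j < x}"
  unfolding ascb_def adj_zip length_filter_conv_card
  by (rule arg_cong[where f=card]) (auto simp: nth_tl)

definition patI :: "nat list \<Rightarrow> nat" where
  "patI xs = card {(i, j). i < j \<and> Suc j < length xs \<and> xs ! j < xs ! Suc j \<and> xs ! Suc j < xs ! i}"

lemma patR_patI: "patR xs = patI xs"
proof (induction xs)
  case Nil show ?case by (simp add: patI_def)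
next
  case (Cons x xs)
  define S where "S = {(i, j). i < j \<and> Suc j < length xs \<and> xs ! j < xs ! Suc j \<and> xs ! Suc j < xs ! i}"
  define J where "J = {j. Suc j < length xs \<and> xs ! j < xs ! Suc j \<and> xs ! Suc j < x}"
  have eq: "{(i, j). i < j \<and> Suc j < length (x # xs) \<and> (x # xs) ! j < (x # xs) ! Suc j \<and> (x # xs) ! Suc j < (x # xs) ! i}
     = (\<lambda>j. (0, Suc j)) ` J \<union> (\<lambda>(i, j). (Suc i, Suc j)) ` S"
  proof (rule set_eqI)
    fix p :: "nat \<times> nat"
    obtain i j where p: "p = (i, j)" by (cases p)
    show "p \<in> {(i, j). i < j \<and> Suc j < length (x # xs) \<and> (x # xs) ! j < (x # xs) ! Suc j \<and> (x # xs) ! Suc j < (x # xs) ! i}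
       \<longleftrightarrow> p \<in> (\<lambda>j. (0, Suc j)) ` J \<union> (\<lambda>(i, j). (Suc i, Suc j)) ` S"
    proof (cases i)
      case 0
      then show ?thesis unfolding p J_def by (cases j) auto
    next
      case (Suc i')
      show ?thesis
      proof (cases j)
        case 0
        then show ?thesis unfolding p Suc by auto
      next
        case (Suc j')
        have "(Suc i', Suc j') \<in> (\<lambda>(i, j). (Suc i, Suc j)) ` S \<longleftrightarrow> (i', j') \<in> S" by auto
        then show ?thesis unfolding p Suc \<open>i = Suc i'\<close> S_def by auto
      qed
    qed
  qed
  have fJ: "finite J" unfolding J_def by (rule finite_subset[of _ "{..<length xs}"]) auto
  have fS: "finite S" unfolding S_def by (rule finite_subset[of _ "{..<length xs} \<times> {..<length xs}"]) auto
  have "patI (x # xs) = card ((\<lambda>j. (0, Suc j)) ` J \<union> (\<lambda>(i, j). (Suc i, Suc j)) ` S)"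
    unfolding patI_def eq ..
  also have "\<dots> = card ((\<lambda>j. (0::nat, Suc j)) ` J) + card ((\<lambda>(i, j). (Suc i, Suc j)) ` S)"
    by (rule card_Un_disjoint) (use fJ fS in auto)
  also have "card ((\<lambda>j. (0::nat, Suc j)) ` J) = card J" by (rule card_image) (auto simp: inj_on_def)
  also have "card ((\<lambda>(i, j). (Suc i, Suc j)) ` S) = card S" by (rule card_image) (auto simp: inj_on_def)
  finally have "patI (x # xs) = card J + card S" .
  moreover have "card S = patI xs" unfolding S_def patI_def ..
  moreover have "card J = ascb x xs" unfolding J_def ascb_card ..
  ultimately show ?case using Cons by simp
qed

lemma pat312_patI:
  "pat312 m p = patI (map p [1..<Suc m])"
proof -
  define xs where "xs = map p [1..<Suc m]"
  have nth: "\<And>k. k < m \<Longrightarrow> xs ! k = p (Suc k)" unfolding xs_def by (simp del: upt_Suc)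
  have len: "length xs = m" unfolding xs_def by simp
  define I where "I = {(i, j). i < j \<and> Suc j < length xs \<and> xs ! j < xs ! Suc j \<and> xs ! Suc j < xs ! i}"
  have eq: "{(i, j). 1 \<le> i \<and> i < j \<and> j < m \<and> p j < p (j + 1) \<and> p (j + 1) < p i} = (\<lambda>(i, j). (Suc i, Suc j)) ` I"
  proof (rule set_eqI, rule iffI)
    fix pr assume "pr \<in> {(i, j). 1 \<le> i \<and> i < j \<and> j < m \<and> p j < p (j + 1) \<and> p (j + 1) < p i}"
    then obtain i j where pr: "pr = (i, j)" and c: "1 \<le> i" "i < j" "j < m" "p j < p (j + 1)" "p (j + 1) < p i" by blast
    obtain i' where i': "i = Suc i'" using c by (cases i) auto
    obtain j' where j': "j = Suc j'" using c by (cases j) auto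
    have "(i', j') \<in> I" unfolding I_def using c i' j' len nth by auto
    then show "pr \<in> (\<lambda>(i, j). (Suc i, Suc j)) ` I" using pr i' j' by force
  next
    fix pr assume "pr \<in> (\<lambda>(i, j). (Suc i, Suc j)) ` I"
    then obtain i j where pr: "pr = (Suc i, Suc j)" and c: "(i, j) \<in> I" by auto
    then show "pr \<in> {(i, j). 1 \<le> i \<and> i < j \<and> j < m \<and> p j < p (j + 1) \<and> p (j + 1) < p i}"
      using c len nth unfolding I_def by auto
  qed
  have "pat312 m p = card ((\<lambda>(i, j). (Suc i, Suc j)) ` I)" unfolding pat312_def eq ..
  also have "\<dots> = card I" by (rule card_image) (auto simp: inj_on_def)
  finally show ?thesis unfolding I_def patI_def xs_def .
qed

lemma before_nth: "before xs x y \<longleftrightarrow> (\<exists>i j. i < j \<and> j < length xs \<and> xs ! i = x \<and> xs ! j = y)"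
proof (induction xs)
  case Nil then show ?case by simp
next
  case (Cons z zs)
  show ?case
  proof
    assume "before (z # zs) x y"
    then have "(z = x \<and> y \<in> set zs) \<or> before zs x y" by simp
    then show "\<exists>i j. i < j \<and> j < length (z # zs) \<and> (z # zs) ! i = x \<and> (z # zs) ! j = y"
    proof
      assume "z = x \<and> y \<in> set zs"
      then obtain j where "j < length zs" "zs ! j = y" "z = x" by (auto simp: in_set_conv_nth)
      then show ?thesis by (intro exI[of _ 0] exI[of _ "Suc j"]) auto
    next
      assume "before zs x y"
      then obtain i j where "i < j" "j < length zs" "zs ! i = x" "zs ! j = y" using Cons.IH by blast
      then show ?thesis by (intro exI[of _ "Suc i"] exI[of _ "Suc j"]) auto
    qed
  next
    assume "\<exists>i j. i < j \<and> j < length (z # zs) \<and> (z # zs) ! i = x \<and> (z # zs) ! j = y"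
    then obtain i j where c: "i < j" "j < length (z # zs)" "(z # zs) ! i = x" "(z # zs) ! j = y" by blast
    obtain j' where j': "j = Suc j'" using c by (cases j) auto
    show "before (z # zs) x y"
    proof (cases i)
      case 0
      then have "z = x" "y \<in> set zs" using c j' by auto
      then show ?thesis by simp
    next
      case (Suc i')
      then have "before zs x y" using Cons.IH c j' by auto
      then show ?thesis by simp
    qed
  qed
qed

lemma avB_nth:
  assumes "distinct xs"
  shows "avB xs \<longleftrightarrow> \<not> (\<exists>i j k. i < j \<and> j < k \<and> k < length xs \<and> xs ! j < xs ! i \<and> xs ! i < xs ! k)"
proof
  assume av: "avB xs"
  show "\<not> (\<exists>i j k. i < j \<and> j < k \<and> k < length xs \<and> xs ! j < xs ! i \<and> xs ! i < xs ! k)"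
  proof
    assume "\<exists>i j k. i < j \<and> j < k \<and> k < length xs \<and> xs ! j < xs ! i \<and> xs ! i < xs ! k"
    then obtain i j k where c: "i < j" "j < k" "k < length xs" "xs ! j < xs ! i" "xs ! i < xs ! k" by blast
    have "before xs (xs ! i) (xs ! j)" "before xs (xs ! j) (xs ! k)"
      unfolding before_nth using c by (blast intro: less_trans)+
    then show False using av c unfolding avB_def by blast
  qed
next
  assume n: "\<not> (\<exists>i j k. i < j \<and> j < k \<and> k < length xs \<and> xs ! j < xs ! i \<and> xs ! i < xs ! k)"
  show "avB xs" unfolding avB_def
  proof (intro allI impI notI)
    fix x y z assume b1: "before xs x y" and b2: "before xs y z" and c: "y < x \<and> x < z"
    obtain i j where ij: "i < j" "j < length xs" "xs ! i = x" "xs ! j = y" using b1 unfolding before_nth by blast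
    obtain j' k where jk: "j' < k" "k < length xs" "xs ! j' = y" "xs ! k = z" using b2 unfolding before_nth by blast
    have "j = j'" using ij jk assms nth_eq_iff_index_eq by (metis less_trans)
    then show False using n ij jk c by blast
  qed
qed

lemma avoids_avB:
  assumes "distinct (map p [1..<Suc m])"
  shows "avoids213 m p \<longleftrightarrow> avB (map p [1..<Suc m])"
proof -
  define xs where "xs = map p [1..<Suc m]"
  have nth: "\<And>k. k < m \<Longrightarrow> xs ! k = p (Suc k)" unfolding xs_def by (simp del: upt_Suc)
  have len: "length xs = m" unfolding xs_def by simp
  have "(\<exists>i j k. 1 \<le> i \<and> i < j \<and> j < k \<and> k \<le> m \<and> p j < p i \<and> p i < p k) \<longleftrightarrow>
        (\<exists>i j k. i < j \<and> j < k \<and> k < length xs \<and> xs ! j < xs ! i \<and> xs ! i < xs ! k)"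
  proof
    assume "\<exists>i j k. 1 \<le> i \<and> i < j \<and> j < k \<and> k \<le> m \<and> p j < p i \<and> p i < p k"
    then obtain i j k where c: "1 \<le> i" "i < j" "j < k" "k \<le> m" "p j < p i" "p i < p k" by blast
    have "i - 1 < j - 1 \<and> j - 1 < k - 1 \<and> k - 1 < length xs \<and> xs ! (j - 1) < xs ! (i - 1) \<and> xs ! (i - 1) < xs ! (k - 1)"
      using c len nth[of "i - 1"] nth[of "j - 1"] nth[of "k - 1"] by auto
    then show "\<exists>i j k. i < j \<and> j < k \<and> k < length xs \<and> xs ! j < xs ! i \<and> xs ! i < xs ! k" by blast
  next
    assume "\<exists>i j k. i < j \<and> j < k \<and> k < length xs \<and> xs ! j < xs ! i \<and> xs ! i < xs ! k"
    then obtain i j k where c: "i < j" "j < k" "k < length xs" "xs ! j < xs ! i" "xs ! i < xs ! k" by blast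
    have "1 \<le> Suc i \<and> Suc i < Suc j \<and> Suc j < Suc k \<and> Suc k \<le> m \<and> p (Suc j) < p (Suc i) \<and> p (Suc i) < p (Suc k)"
      using c len nth[of i] nth[of j] nth[of k] by auto
    then show "\<exists>i j k. 1 \<le> i \<and> i < j \<and> j < k \<and> k \<le> m \<and> p j < p i \<and> p i < p k" by blast
  qed
  then show ?thesis unfolding avoids213_def avB_nth[OF assms] xs_def by simp
qed


definition Aalt :: "(nat \<Rightarrow> nat) \<Rightarrow> nat \<Rightarrow> nat \<Rightarrow> bool" where
  "Aalt f a n = (\<forall>i. a \<le> i \<longrightarrow> i < a + 2 * n \<longrightarrow>
      (even (i - a) \<longrightarrow> f (Suc i) < f i) \<and> (odd (i - a) \<longrightarrow> f i < f (Suc i)))"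

lemma Aalt_Suc: "Aalt f a (Suc n) \<longleftrightarrow> f (Suc a) < f a \<and> f (Suc a) < f (Suc (Suc a)) \<and> Aalt f (Suc (Suc a)) n"
proof
  assume A: "Aalt f a (Suc n)"
  have "f (Suc a) < f a" using A[unfolded Aalt_def, rule_format, of a] by simp
  moreover have "f (Suc a) < f (Suc (Suc a))" using A[unfolded Aalt_def, rule_format, of "Suc a"] by simp
  moreover have "Aalt f (Suc (Suc a)) n"
    unfolding Aalt_def
  proof (intro allI impI)
    fix i assume i: "Suc (Suc a) \<le> i" "i < Suc (Suc a) + 2 * n"
    have d: "i - a = Suc (Suc (i - Suc (Suc a)))" using i by simp
    show "(even (i - Suc (Suc a)) \<longrightarrow> f (Suc i) < f i) \<and> (odd (i - Suc (Suc a)) \<longrightarrow> f i < f (Suc i))"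
      using A[unfolded Aalt_def, rule_format, of i] i d by simp
  qed
  ultimately show "f (Suc a) < f a \<and> f (Suc a) < f (Suc (Suc a)) \<and> Aalt f (Suc (Suc a)) n" by blast
next
  assume B: "f (Suc a) < f a \<and> f (Suc a) < f (Suc (Suc a)) \<and> Aalt f (Suc (Suc a)) n"
  show "Aalt f a (Suc n)"
    unfolding Aalt_def
  proof (intro allI impI)
    fix i assume i: "a \<le> i" "i < a + 2 * Suc n"
    show "(even (i - a) \<longrightarrow> f (Suc i) < f i) \<and> (odd (i - a) \<longrightarrow> f i < f (Suc i))"
    proof (cases "i = a \<or> i = Suc a")
      case True
      then show ?thesis using B by auto
    next
      case False
      then have i2: "Suc (Suc a) \<le> i" "i < Suc (Suc a) + 2 * n" using i by auto
      have d: "i - a = Suc (Suc (i - Suc (Suc a)))" using i2 by simp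
      show ?thesis using B[THEN conjunct2, THEN conjunct2, unfolded Aalt_def, rule_format, OF i2] d by simp
    qed
  qed
qed

lemma altD_map: "altD (map f [a..<a + 2 * n + 1]) = Aalt f a n"
proof (induction n arbitrary: a)
  case 0
  then show ?case by (simp add: Aalt_def)
next
  case (Suc n)
  have u: "[a..<a + 2 * Suc n + 1] = a # Suc a # Suc (Suc a) # [Suc (Suc (Suc a))..<Suc (Suc a) + 2 * n + 1]"
    by (simp add: upt_rec)
  have u2: "[Suc (Suc a)..<Suc (Suc a) + 2 * n + 1] = Suc (Suc a) # [Suc (Suc (Suc a))..<Suc (Suc a) + 2 * n + 1]"
    by (simp add: upt_rec)
  have "altD (map f [a..<a + 2 * Suc n + 1]) =
        (f (Suc a) < f a \<and> f (Suc a) < f (Suc (Suc a)) \<and> altD (map f [Suc (Suc a)..<Suc (Suc a) + 2 * n + 1]))"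
    unfolding u u2 by simp
  also have "\<dots> = Aalt f a (Suc n)" unfolding Suc.IH Aalt_Suc ..
  finally show ?case .
qed

lemma nc_bound: "D \<subseteq> {1..2 * n} \<Longrightarrow> (\<forall>i. i \<in> D \<longrightarrow> Suc i \<notin> D) \<Longrightarrow> card D \<le> n"
proof (induction n arbitrary: D)
  case 0
  then have "D = {}" by auto
  then show ?case by simp
next
  case (Suc n)
  define D1 where "D1 = D \<inter> {1..2 * n}"
  define D2 where "D2 = D \<inter> {2 * n + 1, 2 * n + 2}"
  have DU: "D = D1 \<union> D2" unfolding D1_def D2_def using Suc.prems(1) by auto
  have c1: "card D1 \<le> n" by (rule Suc.IH) (use Suc.prems in \<open>auto simp: D1_def\<close>)
  have c2: "card D2 \<le> 1"
  proof (cases "2 * n + 1 \<in> D")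
    case True
    then have "Suc (2 * n + 1) \<notin> D" using Suc.prems(2) by blast
    then have "D2 = {2 * n + 1}" unfolding D2_def using True by auto
    then show ?thesis by simp
  next
    case False
    then have "D2 \<subseteq> {2 * n + 2}" unfolding D2_def by auto
    then show ?thesis using card_mono[of "{2 * n + 2}" D2] by simp
  qed
  have "card D \<le> card D1 + card D2" unfolding DU by (rule card_Un_le)
  then show ?case using c1 c2 by simp
qed

lemma nc_eq: "D \<subseteq> {1..2 * n} \<Longrightarrow> (\<forall>i. i \<in> D \<longrightarrow> Suc i \<notin> D) \<Longrightarrow> 2 * n \<notin> D \<Longrightarrow> card D = n
   \<Longrightarrow> D = {i \<in> {1..2 * n}. odd i}"
proof (induction n arbitrary: D)
  case 0
  then show ?case by auto
next
  case (Suc n)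
  have fD: "finite D" using Suc.prems(1) finite_subset by blast
  have in1: "2 * n + 1 \<in> D"
  proof (rule ccontr)
    assume "2 * n + 1 \<notin> D"
    then have "D \<subseteq> {1..2 * n}" using Suc.prems(1,3) by (auto simp: le_Suc_eq)
    then have "card D \<le> n" using nc_bound Suc.prems(2) by blast
    then show False using Suc.prems(4) by simp
  qed
  have n2: "2 * n \<notin> D" using Suc.prems(2) in1 by auto
  define D' where "D' = D - {2 * n + 1}"
  have "D' \<subseteq> {1..2 * n}" unfolding D'_def using Suc.prems(1,3) by (auto simp: le_Suc_eq)
  moreover have "\<forall>i. i \<in> D' \<longrightarrow> Suc i \<notin> D'" using Suc.prems(2) unfolding D'_def by auto
  moreover have "2 * n \<notin> D'" using n2 unfolding D'_def by auto
  moreover have "card D' = n" unfolding D'_def using Suc.prems(4) in1 fD by simp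
  ultimately have "D' = {i \<in> {1..2 * n}. odd i}" by (rule Suc.IH)
  then have "D = insert (2 * n + 1) {i \<in> {1..2 * n}. odd i}" using in1 unfolding D'_def by auto
  also have "\<dots> = {i \<in> {1..2 * Suc n}. odd i}" by (auto simp: le_Suc_eq)
  finally show ?case .
qed

lemma card_odds: "card {i \<in> {1..2 * n}. odd i} = n"
proof -
  have "{i \<in> {1..2 * n}. odd i} = (\<lambda>k. 2 * k + 1) ` {..<n}"
  proof (rule set_eqI, rule iffI)
    fix i assume "i \<in> {i \<in> {1..2 * n}. odd i}"
    then obtain k where "i = 2 * k + 1" "i \<le> 2 * n" by (auto elim: oddE)
    then show "i \<in> (\<lambda>k. 2 * k + 1) ` {..<n}" by auto
  qed auto
  moreover have "card ((\<lambda>k. 2 * k + 1) ` {..<n}) = n" by (subst card_image) (auto simp: inj_on_def)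
  ultimately show ?thesis by simp
qed

lemma ddes:
  assumes p: "p permutes {1..2 * n + 1}"
  shows "(dd (2 * n + 1) p = 0 \<and> des (2 * n + 1) p = n) \<longleftrightarrow> Aalt p 1 n"
proof -
  define m where "m = 2 * n + 1"
  have pe: "\<And>i. i \<in> {1..m} \<Longrightarrow> pext m p i = p i" "\<And>i. i \<notin> {1..m} \<Longrightarrow> pext m p i = 0"
    unfolding pext_def by auto
  have pos: "\<And>i. i \<in> {1..m} \<Longrightarrow> p i \<ge> 1" using permutes_in_image[OF p] unfolding m_def by fastforce
  have inj: "inj p" using permutes_inj[OF p] .
  define DD where "DD = {i \<in> {1..m}. pext m p (i - 1) > pext m p i \<and> pext m p i > pext m p (i + 1)}"
  define D where "D = {i \<in> {1..2 * n}. p i > p (i + 1)}"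
  have ddc: "dd m p = card DD" unfolding dd_def DD_def ..
  have desc: "des m p = card D" unfolding des_def D_def m_def by simp
  have fDD: "finite DD" unfolding DD_def by simp
  show ?thesis unfolding m_def[symmetric] ddc desc
  proof
    assume "card DD = 0 \<and> card D = n"
    then have DD0: "DD = {}" and cD: "card D = n" using fDD by auto
    have nodd: "\<And>i. i \<in> {1..m} \<Longrightarrow> \<not> (pext m p (i - 1) > pext m p i \<and> pext m p i > pext m p (i + 1))"
      using DD0 unfolding DD_def by blast
    have nc: "\<forall>i. i \<in> D \<longrightarrow> Suc i \<notin> D"
    proof (intro allI impI notI)
      fix i assume i1: "i \<in> D" and i2: "Suc i \<in> D"
      have r: "1 \<le> i" "Suc i \<le> 2 * n" using i1 i2 unfolding D_def by auto
      have "pext m p (Suc i - 1) > pext m p (Suc i) \<and> pext m p (Suc i) > pext m p (Suc i + 1)"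
        using i1 i2 r pe(1)[of i] pe(1)[of "Suc i"] pe(1)[of "Suc (Suc i)"] unfolding D_def m_def by auto
      then show False using nodd[of "Suc i"] r unfolding m_def by auto
    qed
    have nlast: "2 * n \<notin> D"
    proof
      assume a: "2 * n \<in> D"
      then have n1: "1 \<le> n" unfolding D_def by auto
      have "pext m p (m - 1) > pext m p m \<and> pext m p m > pext m p (m + 1)"
        using a n1 pe(1)[of "2 * n"] pe(1)[of m] pe(2)[of "m + 1"] pos[of m] unfolding D_def m_def by auto
      then show False using nodd[of m] unfolding m_def by auto
    qed
    have Deq: "D = {i \<in> {1..2 * n}. odd i}"
      by (rule nc_eq[OF _ nc nlast cD]) (auto simp: D_def)
    show "Aalt p 1 n"
      unfolding Aalt_def
    proof (intro allI impI)
      fix i assume i: "1 \<le> i" "i < 1 + 2 * n"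
      show "(even (i - 1) \<longrightarrow> p (Suc i) < p i) \<and> (odd (i - 1) \<longrightarrow> p i < p (Suc i))"
      proof (cases "odd i")
        case True
        then have "i \<in> D" using Deq i by auto
        then show ?thesis using True i unfolding D_def by auto
      next
        case False
        then have "i \<notin> D" using Deq i by auto
        then have "\<not> p (Suc i) < p i" using i unfolding D_def by auto
        moreover have "p i \<noteq> p (Suc i)" using inj by (auto dest: injD)
        ultimately show ?thesis using False i by auto
      qed
    qed
  next
    assume A: "Aalt p 1 n"
    have A1: "p (Suc i) < p i" if "1 \<le> i" "i \<le> 2 * n" "odd i" for i
    proof -
      have "even (i - 1)" using that by presburger
      then show ?thesis using A[unfolded Aalt_def, rule_format, of i] that by simp
    qed
    have A2: "p i < p (Suc i)" if "1 \<le> i" "i \<le> 2 * n" "even i" for i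
    proof -
      have "odd (i - 1)" using that by presburger
      then show ?thesis using A[unfolded Aalt_def, rule_format, of i] that by simp
    qed
    have "D = {i \<in> {1..2 * n}. odd i}"
    proof (rule set_eqI)
      fix i show "i \<in> D \<longleftrightarrow> i \<in> {i \<in> {1..2 * n}. odd i}"
        unfolding D_def using A1[of i] A2[of i] by auto
    qed
    then have cD: "card D = n" using card_odds by simp
    have "DD = {}"
    proof (rule ccontr)
      assume "DD \<noteq> {}"
      then obtain i where i: "i \<in> {1..m}" and c: "pext m p (i - 1) > pext m p i" "pext m p i > pext m p (i + 1)"
        unfolding DD_def by blast
      show False
      proof (cases "i = 1")
        case True
        then show False using c pe(2)[of 0] by simp
      next
        case False
        show False
        proof (cases "even i")
          case True
          then have "i \<le> 2 * n" using i unfolding m_def by auto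
          then have "p i < p (Suc i)" using A2[of i] True i by auto
          moreover have "pext m p i = p i" "pext m p (i + 1) = p (Suc i)" using pe(1) i \<open>i \<le> 2 * n\<close> unfolding m_def by auto
          ultimately show False using c by simp
        next
          case odd: False
          then have i2: "2 \<le> i" using False i by auto
          have "p (i - 1) < p (Suc (i - 1))" using A2[of "i - 1"] odd i2 i unfolding m_def by auto
          moreover have "i - 1 \<in> {1..m}" using i i2 by auto
          then have "pext m p (i - 1) = p (i - 1)" by (rule pe(1))
          moreover have "pext m p i = p i" using i by (rule pe(1))
          ultimately show False using c i2 by simp
        qed
      qed
    qed
    then show "card DD = 0 \<and> card D = n" using cD by simp
  qed
qed

theorem main:
  fixes n :: nat and q :: real
  assumes q: "q \<noteq> 0"
  shows "C1 n q = (\<Sum>p\<in>S213 (2 * n + 1) n. q powi (int (n ^ 2) - int (pat312 (2 * n + 1) p)))"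
proof -
  define m where "m = 2 * n + 1"
  define h where "h p = map p [1..<Suc m]" for p :: "nat \<Rightarrow> nat"
  have ivl: "[1..<Suc m] = [1..<1 + 2 * n + 1]" unfolding m_def by simp
  have setm: "{1..<1 + 2 * n + 1} = {1..m}" unfolding m_def by auto
  have inS: "h p \<in> G 1 n" if p: "p \<in> S213 m n" for p
  proof -
    have pp: "p permutes {1..m}" and av: "avoids213 m p" and dd: "dd m p = 0" and de: "des m p = n"
      using p unfolding S213_def by auto
    have dist: "distinct (h p)" unfolding h_def
      using permutes_inj_on[OF pp] by (simp add: distinct_map del: upt_Suc)
    have st: "set (h p) = {1..<1 + 2 * n + 1}" unfolding h_def setm
      using permutes_image[OF pp] by (simp del: upt_Suc add: atLeastLessThanSuc_atLeastAtMost)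
    have alt: "altD (h p)" unfolding h_def ivl altD_map
      using ddes[of p n] pp dd de unfolding m_def by simp
    have "avB (h p)" using avoids_avB[of p m] dist av unfolding h_def by simp
    then show ?thesis unfolding G_def using dist st alt by blast
  qed
  have bij: "bij_betw h (S213 m n) (G 1 n)"
  proof (rule bij_betw_imageI)
    show "inj_on h (S213 m n)"
    proof (rule inj_onI)
      fix p p' assume p: "p \<in> S213 m n" and p': "p' \<in> S213 m n" and e: "h p = h p'"
      have pp: "p permutes {1..m}" "p' permutes {1..m}" using p p' unfolding S213_def by auto
      have "\<forall>x\<in>set [1..<Suc m]. p x = p' x" using e unfolding h_def map_eq_conv .
      then have on: "\<And>x. x \<in> {1..m} \<Longrightarrow> p x = p' x" by (simp del: upt_Suc add: atLeastLessThanSuc_atLeastAtMost)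
      show "p = p'"
      proof
        fix x show "p x = p' x"
        proof (cases "x \<in> {1..m}")
          case True then show ?thesis using on by blast
        next
          case False then show ?thesis using permutes_not_in[OF pp(1)] permutes_not_in[OF pp(2)] by metis
        qed
      qed
    qed
  next
    show "h ` S213 m n = G 1 n"
    proof
      show "h ` S213 m n \<subseteq> G 1 n" using inS by blast
    next
      show "G 1 n \<subseteq> h ` S213 m n"
      proof
        fix xs assume xs: "xs \<in> G 1 n"
        have len: "length xs = m" using G_length[OF xs] unfolding m_def by simp
        have dxs: "distinct xs" and sxs: "set xs = {1..m}" and axs: "altD xs" and vxs: "avB xs"
          using xs setm unfolding G_def by auto
        define p where "p i = (if i \<in> {1..m} then xs ! (i - 1) else i)" for i
        have hp: "h p = xs"
        proof (rule nth_equalityI)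
          show "length (h p) = length xs" unfolding h_def len by simp
        next
          fix k assume "k < length (h p)"
          then have k: "k < m" unfolding h_def by (simp del: upt_Suc)
          then show "h p ! k = xs ! k" unfolding h_def p_def by (simp del: upt_Suc)
        qed
        have injp: "inj_on p {1..m}"
        proof (rule inj_onI)
          fix i j assume i: "i \<in> {1..m}" and j: "j \<in> {1..m}" and e: "p i = p j"
          then have "xs ! (i - 1) = xs ! (j - 1)" unfolding p_def by simp
          then have "i - 1 = j - 1" using nth_eq_iff_index_eq[OF dxs] i j len by auto
          then show "i = j" using i j by auto
        qed
        have imgsub: "p ` {1..m} \<subseteq> {1..m}"
        proof
          fix y assume "y \<in> p ` {1..m}"
          then obtain i where i: "i \<in> {1..m}" and y: "y = p i" by blast
          then have "y = xs ! (i - 1)" unfolding p_def by simp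
          moreover have "i - 1 < length xs" using i len by auto
          ultimately show "y \<in> {1..m}" using sxs nth_mem by metis
        qed
        have ci: "card (p ` {1..m}) = card {1..m}" by (rule card_image[OF injp])
        have "p ` {1..m} = {1..m}"
          by (rule card_subset_eq[OF _ imgsub ci]) simp
        then have "bij_betw p {1..m} {1..m}" using injp by (simp add: bij_betw_def)
        then have pp: "p permutes {1..m}" by (rule bij_imp_permutes) (auto simp: p_def)
        have "altD (h p)" using axs hp by simp
        then have "Aalt p 1 n" unfolding h_def ivl altD_map .
        then have dd: "dd m p = 0 \<and> des m p = n" using ddes[of p n] pp unfolding m_def by simp
        have "avoids213 m p" using avoids_avB[of p m] dxs vxs hp unfolding h_def by simp
        then have "p \<in> S213 m n" unfolding S213_def using pp dd by blast
        then show "xs \<in> h ` S213 m n" using hp by blast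
      qed
    qed
  qed
  have "(\<Sum>p\<in>S213 m n. q powi (int (n ^ 2) - int (pat312 m p))) =
        (\<Sum>p\<in>S213 m n. q powi (int (n ^ 2) - int (patR (h p))))"
    by (rule sum.cong[OF refl]) (simp add: pat312_patI patR_patI h_def)
  also have "\<dots> = (\<Sum>xs\<in>G 1 n. q powi (int (n ^ 2) - int (patR xs)))"
    by (rule sum.reindex_bij_betw[OF bij])
  also have "\<dots> = CC q n" by (rule G_sum[OF q])
  also have "\<dots> = C1 n q" by (rule C1_CC[symmetric])
  finally show ?thesis unfolding m_def by simp
qed


theorem proposition3p10:
  fixes n :: nat and q :: real
  assumes "n \<ge> 1" and "q \<noteq> 0"
  shows "C1 n q = (\<Sum>p\<in>S213 (2 * n + 1) n. q powi (int (n ^ 2) - int (pat312 (2 * n + 1) p)))"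
  using main[OF assms(2)] .

end
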